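(* For every $x\ge1$, $$x^{-1/x}\,\Gamma\!\Big(\frac1x\Big)\ \le\ \Gamma\!\Big(x,\frac1x\Big)\ \le\ x^{x}\,\Gamma(x),$$ and for every $0<x\le1$ both inequalities are reversed: $$x^{-1/x}\,\Gamma\!\Big(\frac1x\Big)\ \ge\ \Gamma\!\Big(x,\frac1x\Big)\ \ge\ x^{x}\,\Gamma(x).$$
   Context: For $x>0,y>0$ the Bigamma function is the (convergent) improper integral $\Gamma(x,y):=\int_0^1(-\ln t)^{x-1}\big(-\ln(1-t)\big)^{y-1}\,dt$. $\Gamma(x)$ (one argument) denotes Euler's gamma function. *)

theory Defs
  imports "HOL-Analysis.Analysis"
begin

text \<open>For x, y > 0 the integrand is nonnegative and (improperly) integrable, so the
  improper Riemann integral coincides with the Lebesgue integral over the open interval.\<close>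

definition Bigamma :: "real \<Rightarrow> real \<Rightarrow> real" where
  "Bigamma x y = (LBINT t:{0<..<1}. (- ln t) powr (x - 1) * (- ln (1 - t)) powr (y - 1))"

end

theory Submission
  imports Defs "HOL-Real_Asymp.Real_Asymp"
begin

lemma ptw:
  fixes x y u :: real assumes x: "x > 0" and u: "u > 0"
  shows "(1 - (1 - exp (-u/x))) powr (x-1) * (- ln (1 - (1 - exp (-u/x)))) powr (y-1) * (exp (-u/x) / x)
         = x powr (-y) * (u powr (y-1) / exp u)"
proof -
  have e1: "exp (-u/x) powr (x-1) * exp (-u/x) = exp (-u) * x powr 0"
    using x by (simp add: powr_def exp_add[symmetric] field_simps)
  have e2: "(u/x) powr (y-1) = u powr (y-1) / x powr (y-1)"
    using x u by (simp add: powr_divide)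
  have e3: "x powr (y-1) * x = x powr y"
    using x by (simp add: powr_diff)
  have "(1 - (1 - exp (-u/x))) powr (x-1) * (- ln (1 - (1 - exp (-u/x)))) powr (y-1) * (exp (-u/x) / x)
     = (exp (-u/x) powr (x-1) * exp (-u/x)) * ((u/x) powr (y-1)) / x" by simp
  also have "\<dots> = exp (-u) * (u powr (y-1) / (x powr (y-1) * x))" using x e1 e2 by simp
  also have "\<dots> = x powr (-y) * (u powr (y-1) / exp u)" using x e3 by (simp add: powr_minus exp_minus field_simps)
  finally show ?thesis .
qed

lemma gamma_set:
  fixes s :: real assumes s: "s > 0"
  shows "set_integrable lborel {0<..} (\<lambda>u. u powr (s-1) / exp u)"
    "(LBINT u:{0<..}. u powr (s-1) / exp u) = Gamma s"
proof -
  have eq: "(\<lambda>t. indicator {0..} t * t powr (s - 1) / exp t) = (\<lambda>t. indicator {0<..} t *\<^sub>R (t powr (s - 1) / exp t))"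
    by (auto simp: indicator_def fun_eq_iff)
  have nn: "(\<integral>\<^sup>+t. ennreal (indicator {0<..} t *\<^sub>R (t powr (s - 1) / exp t)) \<partial>lborel) = ennreal (Gamma s)"
    unfolding Gamma_conv_nn_integral_real[OF s]
    by (rule nn_integral_cong) (auto simp: indicator_def)
  have hb: "has_bochner_integral lborel (\<lambda>t. indicator {0<..} t *\<^sub>R (t powr (s - 1) / exp t)) (Gamma s)"
    by (rule has_bochner_integral_nn_integral[OF _ _ _ nn]) (measurable, auto simp: Gamma_real_pos s less_imp_le)
  show "set_integrable lborel {0<..} (\<lambda>u. u powr (s-1) / exp u)"
    using hb unfolding set_integrable_def by (simp add: has_bochner_integral_iff)
  show "(LBINT u:{0<..}. u powr (s-1) / exp u) = Gamma s"
    using hb unfolding set_lebesgue_integral_def by (simp add: has_bochner_integral_iff)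
qed

lemma Lker:
  fixes x y :: real assumes x: "x > 0" and y: "y > 0"
  shows "set_integrable lborel {0<..<1} (\<lambda>t. (1-t) powr (x-1) * (- ln (1-t)) powr (y-1))"
    "(LBINT t:{0<..<1}. (1-t) powr (x-1) * (- ln (1-t)) powr (y-1)) = x powr (-y) * Gamma y"
proof -
  define f where "f = (\<lambda>t::real. (1-t) powr (x-1) * (- ln (1-t)) powr (y-1))"
  define g where "g = (\<lambda>u::real. 1 - exp (-u/x))"
  define g' where "g' = (\<lambda>u::real. exp (-u/x) / x)"
  have fg: "f (g u) * g' u = x powr (-y) * (u powr (y-1) / exp u)" if "u > 0" for u
    unfolding f_def g_def g'_def using ptw[OF x that] by simp
  have int: "set_integrable lborel (einterval 0 \<infinity>) (\<lambda>u. f (g u) * g' u)"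
  proof -
    have "set_integrable lborel {0<..} (\<lambda>u. x powr (-y) * (u powr (y-1) / exp u))"
      using set_integrable_mult_right[OF gamma_set(1)[OF y], of "x powr (-y)"] by simp
    moreover have "einterval 0 \<infinity> = {0::real<..}" by (simp add: zero_ereal_def)
    ultimately show ?thesis
      by (subst set_integrable_cong[OF refl _ fg]) auto
  qed
  have deriv: "DERIV g u :> g' u" for u
    unfolding g_def g'_def using x by (auto intro!: derivative_eq_intros)
  have contf: "isCont f (g u)" if "0 < u" for u
  proof -
    have "exp (-u/x) < 1" using that x by simp
    hence "0 < 1 - g u" "1 - g u < 1" by (auto simp: g_def)
    hence "- ln (1 - g u) > 0" by simp
    with \<open>0 < 1 - g u\<close> show ?thesis unfolding f_def
      by (intro continuous_intros) auto
  qed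
  have contg': "isCont g' u" for u unfolding g'_def using x by (intro continuous_intros) auto
  have A: "((ereal \<circ> g \<circ> real_of_ereal) \<longlongrightarrow> 0) (at_right 0)"
    unfolding zero_ereal_def ereal_tendsto_simps g_def
  proof -
    have "((\<lambda>u. 1 - exp (-u/x)) \<longlongrightarrow> 1 - exp (-0/x)) (at_right 0)"
      using x by (intro tendsto_intros) auto
    thus "((\<lambda>u. 1 - exp (-u/x)) \<longlongrightarrow> 0) (at_right 0)" by simp
  qed
  have lim0: "((\<lambda>u. exp (-u/x)) \<longlongrightarrow> 0) at_top"
    using x by real_asymp
  have B: "((ereal \<circ> g \<circ> real_of_ereal) \<longlongrightarrow> 1) (at_left \<infinity>)"
    unfolding one_ereal_def ereal_tendsto_simps g_def
    using tendsto_diff[OF tendsto_const lim0, of 1] by simp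
  note sub = interval_integral_substitution_nonneg[of 0 \<infinity> g g' f 0 1,
      OF _ deriv contf contg' _ _ A B int]
  have s1: "set_integrable lborel (einterval 0 1) f"
    using sub(1) x unfolding f_def by (auto simp: zero_ereal_def g_def g'_def)
  have s2: "(LBINT x=0..1. f x) = (LBINT x=0..\<infinity>. f (g x) * g' x)"
    using sub(2) x unfolding f_def by (auto simp: zero_ereal_def g_def g'_def)
  have e01: "einterval 0 1 = {0::real<..<1}" by (simp add: zero_ereal_def one_ereal_def)
  show "set_integrable lborel {0<..<1} (\<lambda>t. (1-t) powr (x-1) * (- ln (1-t)) powr (y-1))"
    using s1 e01 unfolding f_def by simp
  have "(LBINT x=0..\<infinity>. f (g x) * g' x) = (LBINT u:{0<..}. f (g u) * g' u)"
    by (simp add: interval_lebesgue_integral_def zero_ereal_def)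
  also have "\<dots> = (LBINT u:{0<..}. x powr (-y) * (u powr (y-1) / exp u))"
    by (rule set_lebesgue_integral_cong) (auto simp: fg)
  also have "\<dots> = x powr (-y) * Gamma y"
    by (subst set_integral_mult_right) (simp only: gamma_set(2)[OF y])
  finally show "(LBINT t:{0<..<1}. (1-t) powr (x-1) * (- ln (1-t)) powr (y-1)) = x powr (-y) * Gamma y"
    using s2 unfolding f_def by (simp add: interval_lebesgue_integral_def zero_ereal_def one_ereal_def)
qed

lemma refl01:
  fixes f :: "real \<Rightarrow> real"
  shows "set_integrable lborel {0<..<1} (\<lambda>t. f (1-t)) \<longleftrightarrow> set_integrable lborel {0<..<1} f"
    "(LBINT t:{0<..<1}. f (1-t)) = (LBINT t:{0<..<1}. f t)"
proof -
  define h where "h = (\<lambda>x::real. indicator {0<..<1} x *\<^sub>R f x)"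
  have hh: "(\<lambda>x. h (1 + (-1) * x)) = (\<lambda>x. indicator {0<..<1} x *\<^sub>R f (1-x))"
    by (auto simp: h_def indicator_def fun_eq_iff)
  show "set_integrable lborel {0<..<1} (\<lambda>t. f (1-t)) \<longleftrightarrow> set_integrable lborel {0<..<1} f"
  proof -
    have "integrable lborel (\<lambda>x. h (1 + (-1) * x)) = integrable lborel h"
      by (rule lborel_integrable_real_affine_iff) simp
    thus ?thesis unfolding set_integrable_def hh by (simp add: h_def)
  qed
  show "(LBINT t:{0<..<1}. f (1-t)) = (LBINT t:{0<..<1}. f t)"
  proof -
    have "(\<integral>x. h x \<partial>lborel) = \<bar>-1\<bar> *\<^sub>R (\<integral>x. h (1 + (-1) * x) \<partial>lborel)"
      by (rule lborel_integral_real_affine) simp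
    thus ?thesis unfolding set_lebesgue_integral_def hh by (simp add: h_def)
  qed
qed

lemma Uker:
  fixes x y :: real assumes x: "x > 0" and y: "y > 0"
  shows "set_integrable lborel {0<..<1} (\<lambda>t. (- ln t) powr (x-1) * t powr (y-1))"
    "(LBINT t:{0<..<1}. (- ln t) powr (x-1) * t powr (y-1)) = y powr (-x) * Gamma x"
proof -
  define f where "f = (\<lambda>t::real. (1-t) powr (y-1) * (- ln (1-t)) powr (x-1))"
  have ff: "f (1-t) = (- ln t) powr (x-1) * t powr (y-1)" for t
    by (simp add: f_def)
  show "set_integrable lborel {0<..<1} (\<lambda>t. (- ln t) powr (x-1) * t powr (y-1))"
    using refl01(1)[of f] Lker(1)[OF y x] unfolding ff f_def by (simp add: mult.commute)
  show "(LBINT t:{0<..<1}. (- ln t) powr (x-1) * t powr (y-1)) = y powr (-x) * Gamma x"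
    using refl01(2)[of f] Lker(2)[OF y x] unfolding ff f_def by (simp add: mult.commute)
qed

lemma pw_facts:
  fixes t :: real assumes t: "0 < t" "t < 1"
  shows "0 < 1 - t" "1 - t \<le> - ln t" "t \<le> - ln (1 - t)"
proof -
  show "0 < 1 - t" using t by simp
  show "1 - t \<le> - ln t" using ln_le_minus_one[of t] t by simp
  show "t \<le> - ln (1 - t)" using ln_le_minus_one[of "1-t"] t by simp
qed

lemma B_meas: "set_borel_measurable lborel {0<..<1}
   (\<lambda>t::real. (- ln t) powr (x - 1) * (- ln (1 - t)) powr (y - 1))"
  unfolding set_borel_measurable_def by measurable

lemma caseA:
  fixes x :: real assumes x: "x \<ge> 1"
  shows "x powr (-1/x) * Gamma (1/x) \<le> Bigamma x (1/x) \<and> Bigamma x (1/x) \<le> x powr x * Gamma x"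
proof -
  define y where "y = 1/x"
  have x0: "x > 0" and y0: "y > 0" and y1: "y \<le> 1" using x by (auto simp: y_def)
  define B where "B = (\<lambda>t::real. (- ln t) powr (x - 1) * (- ln (1 - t)) powr (y - 1))"
  define U where "U = (\<lambda>t::real. (- ln t) powr (x-1) * t powr (y-1))"
  define L where "L = (\<lambda>t::real. (1-t) powr (x-1) * (- ln (1-t)) powr (y-1))"
  have BU: "B t \<le> U t" if "t \<in> {0<..<1}" for t
  proof -
    have t: "0 < t" "t < 1" using that by auto
    have "(- ln (1 - t)) powr (y - 1) \<le> t powr (y - 1)"
      by (rule powr_mono2') (use pw_facts[OF t] t y1 in auto)
    thus ?thesis unfolding B_def U_def by (intro mult_left_mono) auto
  qed
  have LB: "L t \<le> B t" if "t \<in> {0<..<1}" for t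
  proof -
    have t: "0 < t" "t < 1" using that by auto
    have "(1 - t) powr (x - 1) \<le> (- ln t) powr (x - 1)"
      by (rule powr_mono2) (use pw_facts[OF t] t x in auto)
    thus ?thesis unfolding B_def L_def by (intro mult_right_mono) auto
  qed
  have Uint: "set_integrable lborel {0<..<1} U" unfolding U_def by (rule Uker(1)[OF x0 y0])
  have Lint: "set_integrable lborel {0<..<1} L" unfolding L_def by (rule Lker(1)[OF x0 y0])
  have Bint: "set_integrable lborel {0<..<1} B"
  proof (rule set_integrable_bound[OF Uint])
    show "set_borel_measurable lborel {0<..<1} B" unfolding B_def by (rule B_meas)
    show "AE t in lborel. t \<in> {0<..<1} \<longrightarrow> norm (B t) \<le> norm (U t)"
      using BU by (auto simp: B_def U_def)
  qed
  have "(LBINT t:{0<..<1}. L t) \<le> (LBINT t:{0<..<1}. B t)"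
    by (rule set_integral_mono[OF Lint Bint LB])
  moreover have "(LBINT t:{0<..<1}. L t) = x powr (-1/x) * Gamma (1/x)"
    unfolding L_def Lker(2)[OF x0 y0] by (simp add: y_def)
  moreover have "(LBINT t:{0<..<1}. B t) \<le> (LBINT t:{0<..<1}. U t)"
    by (rule set_integral_mono[OF Bint Uint BU])
  moreover have "(LBINT t:{0<..<1}. U t) = x powr x * Gamma x"
    unfolding U_def Uker(2)[OF x0 y0] using x0 by (simp add: y_def powr_divide powr_minus)
  moreover have "Bigamma x (1/x) = (LBINT t:{0<..<1}. B t)"
    by (simp add: Bigamma_def B_def y_def)
  ultimately show ?thesis by simp
qed

lemma caseB:
  fixes x :: real assumes x0: "0 < x" and x: "x \<le> 1"
  shows "x powr (-1/x) * Gamma (1/x) \<ge> Bigamma x (1/x) \<and> Bigamma x (1/x) \<ge> x powr x * Gamma x"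
proof -
  define y where "y = 1/x"
  have y0: "y > 0" and y1: "y \<ge> 1" using x x0 by (auto simp: y_def)
  define B where "B = (\<lambda>t::real. (- ln t) powr (x - 1) * (- ln (1 - t)) powr (y - 1))"
  define U where "U = (\<lambda>t::real. (- ln t) powr (x-1) * t powr (y-1))"
  define L where "L = (\<lambda>t::real. (1-t) powr (x-1) * (- ln (1-t)) powr (y-1))"
  have BU: "U t \<le> B t" if "t \<in> {0<..<1}" for t
  proof -
    have t: "0 < t" "t < 1" using that by auto
    have "t powr (y - 1) \<le> (- ln (1 - t)) powr (y - 1)"
      by (rule powr_mono2) (use pw_facts[OF t] t y1 in auto)
    thus ?thesis unfolding B_def U_def by (intro mult_left_mono) auto
  qed
  have LB: "B t \<le> L t" if "t \<in> {0<..<1}" for t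
  proof -
    have t: "0 < t" "t < 1" using that by auto
    have "(- ln t) powr (x - 1) \<le> (1 - t) powr (x - 1)"
      by (rule powr_mono2') (use pw_facts[OF t] t x in auto)
    thus ?thesis unfolding B_def L_def by (intro mult_right_mono) auto
  qed
  have Uint: "set_integrable lborel {0<..<1} U" unfolding U_def by (rule Uker(1)[OF x0 y0])
  have Lint: "set_integrable lborel {0<..<1} L" unfolding L_def by (rule Lker(1)[OF x0 y0])
  have Bint: "set_integrable lborel {0<..<1} B"
  proof (rule set_integrable_bound[OF Lint])
    show "set_borel_measurable lborel {0<..<1} B" unfolding B_def by (rule B_meas)
    show "AE t in lborel. t \<in> {0<..<1} \<longrightarrow> norm (B t) \<le> norm (L t)"
      using LB by (auto simp: B_def L_def)
  qed
  have "(LBINT t:{0<..<1}. B t) \<le> (LBINT t:{0<..<1}. L t)"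
    by (rule set_integral_mono[OF Bint Lint LB])
  moreover have "(LBINT t:{0<..<1}. L t) = x powr (-1/x) * Gamma (1/x)"
    unfolding L_def Lker(2)[OF x0 y0] by (simp add: y_def)
  moreover have "(LBINT t:{0<..<1}. U t) \<le> (LBINT t:{0<..<1}. B t)"
    by (rule set_integral_mono[OF Uint Bint BU])
  moreover have "(LBINT t:{0<..<1}. U t) = x powr x * Gamma x"
    unfolding U_def Uker(2)[OF x0 y0] using x0 by (simp add: y_def powr_divide powr_minus)
  moreover have "Bigamma x (1/x) = (LBINT t:{0<..<1}. B t)"
    by (simp add: Bigamma_def B_def y_def)
  ultimately show ?thesis by simp
qed

theorem mainTheorem8:
  shows "(\<forall>x::real. x \<ge> 1 \<longrightarrow>
            x powr (-1/x) * Gamma (1/x) \<le> Bigamma x (1/x) \<and>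
            Bigamma x (1/x) \<le> x powr x * Gamma x) \<and>
         (\<forall>x::real. 0 < x \<and> x \<le> 1 \<longrightarrow>
            x powr (-1/x) * Gamma (1/x) \<ge> Bigamma x (1/x) \<and>
            Bigamma x (1/x) \<ge> x powr x * Gamma x)"
  using caseA caseB by blast

end
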